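(* Let $G$ be a simplicial group and $M$ an abelian $\pi_0(G)$-module. Define $\eta_1:G_1\to (N_1G/B_1NG)\times G_0$ by $\eta_1(g_1)=\big(g_1\,(s_0d_1g_1)^{-1}B_1NG,\ d_1g_1\big)$. Then $z'\mapsto \big((g_1,g_0)\mapsto z'(\eta_1(g_1),g_0)\big)$ defines an isomorphism $Z^2(T^1G,M)\to Z^2(G,M)$ which restricts to an isomorphism $B^2(T^1G,M)\to B^2(G,M)$. In particular $H^2(G,M)\cong H^2(T^1G,M)$.
   Context: Simplicial group $G$: groups $G_n$, faces $d_k$, degeneracies $s_k$. Moore complex $N_0G=G_0$, $N_nG=\bigcap_{k=1}^n\ker d_k$, differential $d_0$; $B_nNG=d_0(N_{n+1}G)$; $\pi_0(G)=G_0/B_0NG$. Cochains of $G$: $C^n(G,M)=\mathrm{Map}(G_{n-1}\times\cdots\times G_0,M)$, $(dc)(g_n,\dots,g_0)=c(d_0g_n,\dots,d_0g_1)+\sum_{k=1}^n(-1)^kc(d_kg_n,\dots,d_kg_{k+1},(d_kg_k)g_{k-1},g_{k-2},\dots,g_0)+(-1)^{n+1}\langle g_n\rangle\cdot c(g_{n-1},\dots,g_0)$, where $\langle g\rangle\in\pi_0(G)$ is the class of $d_1\cdots d_n(g)$. The crossed module $T^1G$: group part $G_0$, module part $N_1G/B_1NG$, structure map $xB_1NG\mapsto d_0x$, action ${}^g(xB_1NG)=s_0(g)xs_0(g)^{-1}B_1NG$; $\pi_0(T^1G)=\pi_0(G)$. For a crossed module $V=(G_V,M_V,\mu)$ with $\bar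 g$ the class of $g$ in $\pi_0(V)=G_V/\mu(M_V)$: $C^1(V,M)=\mathrm{Map}(G_V,M)$, $C^2(V,M)=\mathrm{Map}(M_V\times G_V\times G_V,M)$, $C^3(V,M)=\mathrm{Map}(M_V\times M_V\times G_V\times M_V\times G_V\times G_V,M)$, $(dc)(m,h,g)=c(\mu(m)h)-c(hg)+\bar h\cdot c(g)$, $(dc)(p,n,k,m,h,g)=c(p,\mu(n)k,\mu(m)h)-c(pn,k,hg)+c(n\,{}^km,kh,g)-\bar k\cdot c(m,h,g)$. *)

theory Defs
  imports "HOL-Algebra.Algebra"
begin

text \<open>A simplicial group: groups G n, faces d n k : G n -> G (n-1) (k \<le> n, n \<ge> 1),
  degeneracies s n k : G n -> G (n+1) (k \<le> n). All levels share one element type.\<close>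

record 'a simplicial =
  sgrp  :: "nat \<Rightarrow> 'a monoid"
  face  :: "nat \<Rightarrow> nat \<Rightarrow> 'a \<Rightarrow> 'a"
  degen :: "nat \<Rightarrow> nat \<Rightarrow> 'a \<Rightarrow> 'a"

definition simplicial_group :: "'a simplicial \<Rightarrow> bool" where
  "simplicial_group S \<longleftrightarrow>
     (let G = sgrp S; d = face S; s = degen S in
     (\<forall>n. group (G n)) \<and>
     (\<forall>n i. 1 \<le> n \<and> i \<le> n \<longrightarrow> d n i \<in> hom (G n) (G (n - 1))) \<and>
     (\<forall>n i. i \<le> n \<longrightarrow> s n i \<in> hom (G n) (G (Suc n))) \<and>
     (\<forall>n i j x. 2 \<le> n \<and> i < j \<and> j \<le> n \<and> x \<in> carrier (G n) \<longrightarrow>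
         d (n - 1) i (d n j x) = d (n - 1) (j - 1) (d n i x)) \<and>
     (\<forall>n i j x. i < j \<and> j \<le> n \<and> x \<in> carrier (G n) \<longrightarrow>
         d (Suc n) i (s n j x) = s (n - 1) (j - 1) (d n i x)) \<and>
     (\<forall>n j x. j \<le> n \<and> x \<in> carrier (G n) \<longrightarrow>
         d (Suc n) j (s n j x) = x \<and> d (Suc n) (Suc j) (s n j x) = x) \<and>
     (\<forall>n i j x. Suc j < i \<and> i \<le> Suc n \<and> x \<in> carrier (G n) \<longrightarrow>
         d (Suc n) i (s n j x) = s (n - 1) j (d n (i - 1) x)) \<and>
     (\<forall>n i j x. i \<le> j \<and> j \<le> n \<and> x \<in> carrier (G n) \<longrightarrow>
         s (Suc n) i (s n j x) = s (Suc n) (Suc j) (s n i x)))"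

definition moore :: "'a simplicial \<Rightarrow> nat \<Rightarrow> 'a set" where
  "moore S n = (if n = 0 then carrier (sgrp S 0)
     else {x \<in> carrier (sgrp S n). \<forall>k\<in>{1..n}. face S n k x = \<one>\<^bsub>sgrp S (n - 1)\<^esub>})"

definition mooreB :: "'a simplicial \<Rightarrow> nat \<Rightarrow> 'a set" where
  "mooreB S n = face S (Suc n) 0 ` moore S (Suc n)"

definition pi0 :: "'a simplicial \<Rightarrow> 'a set monoid" where
  "pi0 S = sgrp S 0 Mod mooreB S 0"

definition cls0 :: "'a simplicial \<Rightarrow> 'a \<Rightarrow> 'a set" where
  "cls0 S g = mooreB S 0 #>\<^bsub>sgrp S 0\<^esub> g"

definition pi0_module :: "'a simplicial \<Rightarrow> ('a set \<Rightarrow> 'm::ab_group_add \<Rightarrow> 'm) \<Rightarrow> bool" where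
  "pi0_module S \<rho> \<longleftrightarrow>
     (\<forall>x\<in>carrier (pi0 S). \<forall>a b. \<rho> x (a + b) = \<rho> x a + \<rho> x b) \<and>
     (\<forall>a. \<rho> \<one>\<^bsub>pi0 S\<^esub> a = a) \<and>
     (\<forall>x\<in>carrier (pi0 S). \<forall>y\<in>carrier (pi0 S). \<forall>a. \<rho> (x \<otimes>\<^bsub>pi0 S\<^esub> y) a = \<rho> x (\<rho> y a))"

text \<open>Cochains of G in degrees 1,2 (maps on G_0, resp. G_1 x G_0; extensional),
  and the coboundaries C^1 -> C^2 -> C^3 instantiated from the general formula.\<close>

definition sdom1 :: "'a simplicial \<Rightarrow> 'a set" where
  "sdom1 S = carrier (sgrp S 0)"

definition sdom2 :: "'a simplicial \<Rightarrow> ('a \<times> 'a) set" where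
  "sdom2 S = carrier (sgrp S 1) \<times> carrier (sgrp S 0)"

definition sC1 :: "'a simplicial \<Rightarrow> ('a \<Rightarrow> 'm) set" where
  "sC1 S = extensional (sdom1 S)"

definition sC2 :: "'a simplicial \<Rightarrow> ('a \<times> 'a \<Rightarrow> 'm) set" where
  "sC2 S = extensional (sdom2 S)"

definition sd1 :: "'a simplicial \<Rightarrow> ('a set \<Rightarrow> 'm::ab_group_add \<Rightarrow> 'm) \<Rightarrow> ('a \<Rightarrow> 'm) \<Rightarrow> 'a \<times> 'a \<Rightarrow> 'm" where
  "sd1 S \<rho> c = (\<lambda>(g1, g0).
      c (face S 1 0 g1)
    - c (face S 1 1 g1 \<otimes>\<^bsub>sgrp S 0\<^esub> g0)
    + \<rho> (cls0 S (face S 1 1 g1)) (c g0))"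

definition sd2 :: "'a simplicial \<Rightarrow> ('a set \<Rightarrow> 'm::ab_group_add \<Rightarrow> 'm) \<Rightarrow> ('a \<times> 'a \<Rightarrow> 'm) \<Rightarrow> 'a \<times> 'a \<times> 'a \<Rightarrow> 'm" where
  "sd2 S \<rho> c = (\<lambda>(g2, g1, g0).
      c (face S 2 0 g2, face S 1 0 g1)
    - c (face S 2 1 g2, face S 1 1 g1 \<otimes>\<^bsub>sgrp S 0\<^esub> g0)
    + c (face S 2 2 g2 \<otimes>\<^bsub>sgrp S 1\<^esub> g1, g0)
    - \<rho> (cls0 S (face S 1 1 (face S 2 2 g2))) (c (g1, g0)))"

definition sZ2 :: "'a simplicial \<Rightarrow> ('a set \<Rightarrow> 'm::ab_group_add \<Rightarrow> 'm) \<Rightarrow> ('a \<times> 'a \<Rightarrow> 'm) set" where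
  "sZ2 S \<rho> = {c \<in> sC2 S. \<forall>g2\<in>carrier (sgrp S 2). \<forall>g1\<in>carrier (sgrp S 1). \<forall>g0\<in>carrier (sgrp S 0).
                  sd2 S \<rho> c (g2, g1, g0) = 0}"

definition sB2 :: "'a simplicial \<Rightarrow> ('a set \<Rightarrow> 'm::ab_group_add \<Rightarrow> 'm) \<Rightarrow> ('a \<times> 'a \<Rightarrow> 'm) set" where
  "sB2 S \<rho> = (\<lambda>c. restrict (sd1 S \<rho> c) (sdom2 S)) ` sC1 S"

record ('g, 'h) xmod =
  xG   :: "'g monoid"
  xM   :: "'h monoid"
  xmu  :: "'h \<Rightarrow> 'g"
  xact :: "'g \<Rightarrow> 'h \<Rightarrow> 'h"

definition xcls :: "('g, 'h) xmod \<Rightarrow> 'g \<Rightarrow> 'g set" where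
  "xcls V g = (xmu V ` carrier (xM V)) #>\<^bsub>xG V\<^esub> g"

definition xdom1 :: "('g, 'h) xmod \<Rightarrow> 'g set" where
  "xdom1 V = carrier (xG V)"

definition xdom2 :: "('g, 'h) xmod \<Rightarrow> ('h \<times> 'g \<times> 'g) set" where
  "xdom2 V = carrier (xM V) \<times> carrier (xG V) \<times> carrier (xG V)"

definition xC1 :: "('g, 'h) xmod \<Rightarrow> ('g \<Rightarrow> 'm) set" where
  "xC1 V = extensional (xdom1 V)"

definition xC2 :: "('g, 'h) xmod \<Rightarrow> ('h \<times> 'g \<times> 'g \<Rightarrow> 'm) set" where
  "xC2 V = extensional (xdom2 V)"

definition xd1 :: "('g, 'h) xmod \<Rightarrow> ('g set \<Rightarrow> 'm::ab_group_add \<Rightarrow> 'm) \<Rightarrow> ('g \<Rightarrow> 'm) \<Rightarrow> 'h \<times> 'g \<times> 'g \<Rightarrow> 'm" where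
  "xd1 V \<rho> c = (\<lambda>(m, h, g).
      c (xmu V m \<otimes>\<^bsub>xG V\<^esub> h) - c (h \<otimes>\<^bsub>xG V\<^esub> g) + \<rho> (xcls V h) (c g))"

definition xd2 :: "('g, 'h) xmod \<Rightarrow> ('g set \<Rightarrow> 'm::ab_group_add \<Rightarrow> 'm) \<Rightarrow> ('h \<times> 'g \<times> 'g \<Rightarrow> 'm)
     \<Rightarrow> 'h \<times> 'h \<times> 'g \<times> 'h \<times> 'g \<times> 'g \<Rightarrow> 'm" where
  "xd2 V \<rho> c = (\<lambda>(p, n, k, m, h, g).
      c (p, xmu V n \<otimes>\<^bsub>xG V\<^esub> k, xmu V m \<otimes>\<^bsub>xG V\<^esub> h)
    - c (p \<otimes>\<^bsub>xM V\<^esub> n, k, h \<otimes>\<^bsub>xG V\<^esub> g)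
    + c (n \<otimes>\<^bsub>xM V\<^esub> xact V k m, k \<otimes>\<^bsub>xG V\<^esub> h, g)
    - \<rho> (xcls V k) (c (m, h, g)))"

definition xZ2 :: "('g, 'h) xmod \<Rightarrow> ('g set \<Rightarrow> 'm::ab_group_add \<Rightarrow> 'm) \<Rightarrow> ('h \<times> 'g \<times> 'g \<Rightarrow> 'm) set" where
  "xZ2 V \<rho> = {c \<in> xC2 V. \<forall>p\<in>carrier (xM V). \<forall>n\<in>carrier (xM V). \<forall>k\<in>carrier (xG V).
                  \<forall>m\<in>carrier (xM V). \<forall>h\<in>carrier (xG V). \<forall>g\<in>carrier (xG V).
                  xd2 V \<rho> c (p, n, k, m, h, g) = 0}"

definition xB2 :: "('g, 'h) xmod \<Rightarrow> ('g set \<Rightarrow> 'm::ab_group_add \<Rightarrow> 'm) \<Rightarrow> ('h \<times> 'g \<times> 'g \<Rightarrow> 'm) set" where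
  "xB2 V \<rho> = (\<lambda>c. restrict (xd1 V \<rho> c) (xdom2 V)) ` xC1 V"

definition T1 :: "'a simplicial \<Rightarrow> ('a, 'a set) xmod" where
  "T1 S = xmod.make (sgrp S 0)
            ((sgrp S 1)\<lparr>carrier := moore S 1\<rparr> Mod mooreB S 1)
            (\<lambda>Y. the_elem (face S 1 0 ` Y))
            (\<lambda>g Y. the_elem ((\<lambda>y. mooreB S 1 #>\<^bsub>sgrp S 1\<^esub>
                       (degen S 0 0 g \<otimes>\<^bsub>sgrp S 1\<^esub> y \<otimes>\<^bsub>sgrp S 1\<^esub> inv\<^bsub>sgrp S 1\<^esub> (degen S 0 0 g))) ` Y))"

definition eta1 :: "'a simplicial \<Rightarrow> 'a \<Rightarrow> 'a set \<times> 'a" where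
  "eta1 S g1 = (mooreB S 1 #>\<^bsub>sgrp S 1\<^esub>
                  (g1 \<otimes>\<^bsub>sgrp S 1\<^esub> inv\<^bsub>sgrp S 1\<^esub> (degen S 0 0 (face S 1 1 g1))),
                face S 1 1 g1)"

definition Phi :: "'a simplicial \<Rightarrow> ('a set \<times> 'a \<times> 'a \<Rightarrow> 'm) \<Rightarrow> 'a \<times> 'a \<Rightarrow> 'm" where
  "Phi S z' = restrict (\<lambda>(g1, g0). z' (fst (eta1 S g1), snd (eta1 S g1), g0)) (sdom2 S)"

definition addon :: "'x set \<Rightarrow> ('x \<Rightarrow> 'm::ab_group_add) \<Rightarrow> ('x \<Rightarrow> 'm) \<Rightarrow> 'x \<Rightarrow> 'm" where
  "addon D f g = restrict (\<lambda>x. f x + g x) D"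

end

theory Submission
  imports Defs
begin

declare One_nat_def[simp del]
lemma nat_facts: "(2::nat) - 1 = 1" "(1::nat) - 1 = 0" "Suc 1 = 2" "Suc 0 = 1" "(2::nat) - 2 = 0" "(1::nat) \<le> 2"
  by simp_all

lemma rcu: "r_coset (M\<lparr>carrier := C\<rparr>) A b = r_coset M A b"
  by (simp add: r_coset_def)
lemma smu: "set_mult (M\<lparr>carrier := C\<rparr>) A B = set_mult M A B"
  by (simp add: set_mult_def)

lemma ab_cancel4: "(u::'m::ab_group_add) - r1 + r2 - r3 = 0 \<Longrightarrow> v - r1 + r2 - r3 = 0 \<Longrightarrow> u = v"
proof -
  assume a: "u - r1 + r2 - r3 = 0" and b: "v - r1 + r2 - r3 = 0"
  have "u = r1 - r2 + r3" using a by (simp add: algebra_simps eq_neg_iff_add_eq_0 add_eq_0_iff)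
  moreover have "v = r1 - r2 + r3" using b by (simp add: algebra_simps eq_neg_iff_add_eq_0 add_eq_0_iff)
  ultimately show ?thesis by simp
qed

locale SG =
  fixes S :: "'a simplicial"
  assumes SG: "simplicial_group S"
begin

abbreviation "G0 \<equiv> sgrp S 0"
abbreviation "G1 \<equiv> sgrp S 1"
abbreviation "G2 \<equiv> sgrp S 2"
abbreviation "d10 \<equiv> face S 1 0"
abbreviation "d11 \<equiv> face S 1 1"
abbreviation "d20 \<equiv> face S 2 0"
abbreviation "d21 \<equiv> face S 2 1"
abbreviation "d22 \<equiv> face S 2 2"
abbreviation "s00 \<equiv> degen S 0 0"
abbreviation "s10 \<equiv> degen S 1 0"
abbreviation "s11 \<equiv> degen S 1 1"

lemmas SGD = SG[unfolded simplicial_group_def Let_def]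

lemma grp: "group (sgrp S n)"
  using SGD[THEN conjunct1] by blast

lemma facehom: "1 \<le> n \<Longrightarrow> i \<le> n \<Longrightarrow> face S n i \<in> hom (sgrp S n) (sgrp S (n - 1))"
  using SGD[THEN conjunct2, THEN conjunct1] by blast
lemma degenhom: "i \<le> n \<Longrightarrow> degen S n i \<in> hom (sgrp S n) (sgrp S (Suc n))"
  using SGD[THEN conjunct2, THEN conjunct2, THEN conjunct1] by blast

lemma ax_dd: "2 \<le> n \<Longrightarrow> i < j \<Longrightarrow> j \<le> n \<Longrightarrow> x \<in> carrier (sgrp S n) \<Longrightarrow>
         face S (n - 1) i (face S n j x) = face S (n - 1) (j - 1) (face S n i x)"
  using SGD[THEN conjunct2, THEN conjunct2, THEN conjunct2, THEN conjunct1] by blast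
lemma ax_ds1: "i < j \<Longrightarrow> j \<le> n \<Longrightarrow> x \<in> carrier (sgrp S n) \<Longrightarrow>
         face S (Suc n) i (degen S n j x) = degen S (n - 1) (j - 1) (face S n i x)"
  using SGD[THEN conjunct2, THEN conjunct2, THEN conjunct2, THEN conjunct2, THEN conjunct1] by blast
lemma ax_ds2: "j \<le> n \<Longrightarrow> x \<in> carrier (sgrp S n) \<Longrightarrow>
         face S (Suc n) j (degen S n j x) = x \<and> face S (Suc n) (Suc j) (degen S n j x) = x"
  using SGD[THEN conjunct2, THEN conjunct2, THEN conjunct2, THEN conjunct2, THEN conjunct2, THEN conjunct1] by blast
lemma ax_ds3: "Suc j < i \<Longrightarrow> i \<le> Suc n \<Longrightarrow> x \<in> carrier (sgrp S n) \<Longrightarrow>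
         face S (Suc n) i (degen S n j x) = degen S (n - 1) j (face S n (i - 1) x)"
  using SGD[THEN conjunct2, THEN conjunct2, THEN conjunct2, THEN conjunct2, THEN conjunct2, THEN conjunct2, THEN conjunct1] by blast

sublocale G0: group G0 by (rule grp)
sublocale G1: group G1 by (rule grp)
sublocale G2: group G2 by (rule grp)

sublocale D10: group_hom G1 G0 d10
  using facehom[of 1 0] unfolding nat_facts by (simp add: group_hom_def group_hom_axioms_def grp)
sublocale D11: group_hom G1 G0 d11
  using facehom[of 1 1] unfolding nat_facts by (simp add: group_hom_def group_hom_axioms_def grp)
sublocale D20: group_hom G2 G1 d20
  using facehom[of 2 0] unfolding nat_facts by (simp add: group_hom_def group_hom_axioms_def grp)
sublocale D21: group_hom G2 G1 d21
  using facehom[of 2 1] unfolding nat_facts by (simp add: group_hom_def group_hom_axioms_def grp)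
sublocale D22: group_hom G2 G1 d22
  using facehom[of 2 2] unfolding nat_facts by (simp add: group_hom_def group_hom_axioms_def grp)
sublocale S00: group_hom G0 G1 s00
  using degenhom[of 0 0] unfolding nat_facts by (simp add: group_hom_def group_hom_axioms_def grp)
sublocale S10: group_hom G1 G2 s10
  using degenhom[of 0 1] unfolding nat_facts by (simp add: group_hom_def group_hom_axioms_def grp)
sublocale S11: group_hom G1 G2 s11
  using degenhom[of 1 1] unfolding nat_facts by (simp add: group_hom_def group_hom_axioms_def grp)

lemma i_d10_d22: "x \<in> carrier G2 \<Longrightarrow> d10 (d22 x) = d11 (d20 x)"
  using ax_dd[of 2 0 2 x] unfolding nat_facts by simp
lemma i_d11_d22: "x \<in> carrier G2 \<Longrightarrow> d11 (d22 x) = d11 (d21 x)"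
  using ax_dd[of 2 1 2 x] unfolding nat_facts by simp
lemma i_d10_d21: "x \<in> carrier G2 \<Longrightarrow> d10 (d21 x) = d10 (d20 x)"
  using ax_dd[of 2 0 1 x] unfolding nat_facts by simp
lemma i_d20_s11: "x \<in> carrier G1 \<Longrightarrow> d20 (s11 x) = s00 (d10 x)"
  using ax_ds1[of 0 1 1 x] unfolding nat_facts by simp
lemma i_d21_s11: "x \<in> carrier G1 \<Longrightarrow> d21 (s11 x) = x"
  using ax_ds2[of 1 1 x] unfolding nat_facts by simp
lemma i_d22_s11: "x \<in> carrier G1 \<Longrightarrow> d22 (s11 x) = x"
  using ax_ds2[of 1 1 x] unfolding nat_facts by simp
lemma i_d20_s10: "x \<in> carrier G1 \<Longrightarrow> d20 (s10 x) = x"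
  using ax_ds2[of 0 1 x] unfolding nat_facts by simp
lemma i_d21_s10: "x \<in> carrier G1 \<Longrightarrow> d21 (s10 x) = x"
  using ax_ds2[of 0 1 x] unfolding nat_facts by simp
lemma i_d22_s10: "x \<in> carrier G1 \<Longrightarrow> d22 (s10 x) = s00 (d11 x)"
  using ax_ds3[of 0 2 1 x] unfolding nat_facts by simp
lemma i_d10_s00: "x \<in> carrier G0 \<Longrightarrow> d10 (s00 x) = x"
  using ax_ds2[of 0 0 x] unfolding nat_facts by simp
lemma i_d11_s00: "x \<in> carrier G0 \<Longrightarrow> d11 (s00 x) = x"
  using ax_ds2[of 0 0 x] unfolding nat_facts by simp

lemmas ids = i_d10_d22 i_d11_d22 i_d10_d21 i_d20_s11 i_d21_s11 i_d22_s11 i_d20_s10 i_d21_s10 i_d22_s10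
  i_d10_s00 i_d11_s00

abbreviation "N1 \<equiv> moore S 1"
abbreviation "N2 \<equiv> moore S 2"
abbreviation "B1 \<equiv> mooreB S 1"
abbreviation "B0 \<equiv> mooreB S 0"
abbreviation "rc a \<equiv> B1 #>\<^bsub>G1\<^esub> a"

lemma mem_N1: "x \<in> N1 \<longleftrightarrow> x \<in> carrier G1 \<and> d11 x = \<one>\<^bsub>G0\<^esub>"
  unfolding moore_def nat_facts by simp

lemma mem_N2: "x \<in> N2 \<longleftrightarrow> x \<in> carrier G2 \<and> d21 x = \<one>\<^bsub>G1\<^esub> \<and> d22 x = \<one>\<^bsub>G1\<^esub>"
proof -
  have e: "{1..2::nat} = {1,2}" by auto
  show ?thesis unfolding moore_def e nat_facts by simp
qed

lemma B1_eq: "B1 = d20 ` N2"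
  unfolding mooreB_def nat_facts ..
lemma B0_eq: "B0 = d10 ` N1"
  unfolding mooreB_def nat_facts ..

lemma N1_sub: "subgroup N1 G1"
proof -
  have "N1 = kernel G1 G0 d11" by (auto simp: kernel_def mem_N1)
  thus ?thesis using D11.subgroup_kernel by simp
qed

lemma N2_sub: "subgroup N2 G2"
proof (rule G2.subgroupI)
  show "N2 \<subseteq> carrier G2" by (auto simp: mem_N2)
  have "\<one>\<^bsub>G2\<^esub> \<in> N2" by (simp add: mem_N2)
  thus "N2 \<noteq> {}" by blast
qed (auto simp: mem_N2)

lemma B1_N1: "b \<in> B1 \<Longrightarrow> b \<in> N1"
  by (auto simp: B1_eq mem_N1 mem_N2 ids[symmetric])

lemma B1_carr: "b \<in> B1 \<Longrightarrow> b \<in> carrier G1"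
  using B1_N1 mem_N1 by blast

lemma B1_d10: "b \<in> B1 \<Longrightarrow> d10 b = \<one>\<^bsub>G0\<^esub>"
  by (auto simp: B1_eq mem_N2 ids[symmetric])

lemma B1_sub: "subgroup B1 G1"
proof (rule G1.subgroupI)
  show "B1 \<subseteq> carrier G1" using B1_carr by blast
  show "B1 \<noteq> {}" unfolding B1_eq using subgroup.one_closed[OF N2_sub] by blast
  show "inv\<^bsub>G1\<^esub> a \<in> B1" if a: "a \<in> B1" for a
  proof -
    obtain x where x: "x \<in> N2" "a = d20 x" using a unfolding B1_eq by blast
    have m: "inv\<^bsub>G2\<^esub> x \<in> N2" by (rule subgroup.m_inv_closed[OF N2_sub x(1)])
    have e: "inv\<^bsub>G1\<^esub> a = d20 (inv\<^bsub>G2\<^esub> x)" using x by (simp add: mem_N2)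
    show ?thesis unfolding B1_eq e by (rule imageI[OF m])
  qed
  show "a \<otimes>\<^bsub>G1\<^esub> b \<in> B1" if ab: "a \<in> B1" "b \<in> B1" for a b
  proof -
    obtain x where x: "x \<in> N2" "a = d20 x" using ab(1) unfolding B1_eq by blast
    obtain y where y: "y \<in> N2" "b = d20 y" using ab(2) unfolding B1_eq by blast
    have m: "x \<otimes>\<^bsub>G2\<^esub> y \<in> N2" by (rule subgroup.m_closed[OF N2_sub x(1) y(1)])
    have e: "a \<otimes>\<^bsub>G1\<^esub> b = d20 (x \<otimes>\<^bsub>G2\<^esub> y)" using x y by (simp add: mem_N2)
    show ?thesis unfolding B1_eq e by (rule imageI[OF m])
  qed
qed

lemma B1_conj: "g \<in> carrier G1 \<Longrightarrow> b \<in> B1 \<Longrightarrow> g \<otimes>\<^bsub>G1\<^esub> b \<otimes>\<^bsub>G1\<^esub> inv\<^bsub>G1\<^esub> g \<in> B1"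
proof -
  assume g: "g \<in> carrier G1" and b: "b \<in> B1"
  obtain x where x: "x \<in> N2" "b = d20 x" using b unfolding B1_eq by blast
  have xc: "x \<in> carrier G2" using x mem_N2 by blast
  let ?y = "s10 g \<otimes>\<^bsub>G2\<^esub> x \<otimes>\<^bsub>G2\<^esub> inv\<^bsub>G2\<^esub> (s10 g)"
  have m: "?y \<in> N2" using x g xc by (simp add: mem_N2 i_d21_s10 i_d22_s10)
  have e: "g \<otimes>\<^bsub>G1\<^esub> b \<otimes>\<^bsub>G1\<^esub> inv\<^bsub>G1\<^esub> g = d20 ?y" using x g xc by (simp add: i_d20_s10)
  show ?thesis unfolding B1_eq e by (rule imageI[OF m])
qed

lemma B1_normal: "B1 \<lhd> G1"
  unfolding G1.normal_inv_iff using B1_sub B1_conj by blast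

lemma canc1[simp]: "x \<in> carrier (sgrp S n) \<Longrightarrow> y \<in> carrier (sgrp S n) \<Longrightarrow>
   inv\<^bsub>sgrp S n\<^esub> x \<otimes>\<^bsub>sgrp S n\<^esub> (x \<otimes>\<^bsub>sgrp S n\<^esub> y) = y"
proof -
  interpret H: group "sgrp S n" by (rule grp)
  assume "x \<in> carrier (sgrp S n)" "y \<in> carrier (sgrp S n)"
  thus ?thesis by (simp add: H.m_assoc[symmetric])
qed
lemma canc2[simp]: "x \<in> carrier (sgrp S n) \<Longrightarrow> y \<in> carrier (sgrp S n) \<Longrightarrow>
   x \<otimes>\<^bsub>sgrp S n\<^esub> (inv\<^bsub>sgrp S n\<^esub> x \<otimes>\<^bsub>sgrp S n\<^esub> y) = y"
proof -
  interpret H: group "sgrp S n" by (rule grp)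
  assume "x \<in> carrier (sgrp S n)" "y \<in> carrier (sgrp S n)"
  thus ?thesis by (simp add: H.m_assoc[symmetric])
qed

lemma T1_xG[simp]: "xG (T1 S) = G0" by (simp add: T1_def xmod.make_def)
lemma T1_xM: "xM (T1 S) = (G1\<lparr>carrier := N1\<rparr>) Mod B1" by (simp add: T1_def xmod.make_def)
lemma T1_xmu: "xmu (T1 S) Y = the_elem (d10 ` Y)" by (simp add: T1_def xmod.make_def)
lemma T1_xact: "xact (T1 S) g Y = the_elem ((\<lambda>y. rc (s00 g \<otimes>\<^bsub>G1\<^esub> y \<otimes>\<^bsub>G1\<^esub> inv\<^bsub>G1\<^esub> (s00 g))) ` Y)"
  by (simp add: T1_def xmod.make_def)

lemma rc_eq: "b \<in> B1 \<Longrightarrow> a \<in> carrier G1 \<Longrightarrow> rc (b \<otimes>\<^bsub>G1\<^esub> a) = rc a"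
proof -
  assume b: "b \<in> B1" and a: "a \<in> carrier G1"
  have "rc (b \<otimes>\<^bsub>G1\<^esub> a) = (B1 #>\<^bsub>G1\<^esub> b) #>\<^bsub>G1\<^esub> a"
    using G1.coset_mult_assoc[of B1 b a] B1_carr b a by blast
  also have "B1 #>\<^bsub>G1\<^esub> b = B1" by (rule subgroup.rcos_const[OF B1_sub G1.group_axioms b])
  finally show ?thesis .
qed

lemma rc_elem: "y \<in> rc a \<Longrightarrow> \<exists>b\<in>B1. y = b \<otimes>\<^bsub>G1\<^esub> a"
  by (auto simp: r_coset_def)

lemma rc_self: "a \<in> carrier G1 \<Longrightarrow> a \<in> rc a"
  by (rule G1.rcos_self[OF _ B1_sub])

lemma xM_carrier: "carrier (xM (T1 S)) = rc ` N1"
  by (auto simp: T1_xM FactGroup_def RCOSETS_def rcu)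

lemma xM_mult: "a \<in> carrier G1 \<Longrightarrow> b \<in> carrier G1 \<Longrightarrow> rc a \<otimes>\<^bsub>xM (T1 S)\<^esub> rc b = rc (a \<otimes>\<^bsub>G1\<^esub> b)"
  by (simp add: T1_xM FactGroup_def smu normal.rcos_sum[OF B1_normal])

lemma xmu_rc: "a \<in> carrier G1 \<Longrightarrow> xmu (T1 S) (rc a) = d10 a"
proof -
  assume a: "a \<in> carrier G1"
  have "d10 ` rc a = {d10 a}"
  proof
    show "d10 ` rc a \<subseteq> {d10 a}"
    proof
      fix z assume "z \<in> d10 ` rc a"
      then obtain y where y: "y \<in> rc a" "z = d10 y" by blast
      then obtain b where b: "b \<in> B1" "y = b \<otimes>\<^bsub>G1\<^esub> a" using rc_elem by blast
      show "z \<in> {d10 a}" using y b a B1_carr[OF b(1)] B1_d10[OF b(1)] by simp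
    qed
    show "{d10 a} \<subseteq> d10 ` rc a" using rc_self[OF a] by blast
  qed
  thus ?thesis by (simp add: T1_xmu)
qed

lemma xact_rc: "k \<in> carrier G0 \<Longrightarrow> a \<in> carrier G1 \<Longrightarrow>
   xact (T1 S) k (rc a) = rc (s00 k \<otimes>\<^bsub>G1\<^esub> a \<otimes>\<^bsub>G1\<^esub> inv\<^bsub>G1\<^esub> (s00 k))"
proof -
  assume k: "k \<in> carrier G0" and a: "a \<in> carrier G1"
  let ?f = "\<lambda>y. rc (s00 k \<otimes>\<^bsub>G1\<^esub> y \<otimes>\<^bsub>G1\<^esub> inv\<^bsub>G1\<^esub> (s00 k))"
  have "?f ` rc a = {?f a}"
  proof
    show "?f ` rc a \<subseteq> {?f a}"
    proof
      fix z assume "z \<in> ?f ` rc a"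
      then obtain y where y: "y \<in> rc a" "z = ?f y" by blast
      then obtain b where b: "b \<in> B1" "y = b \<otimes>\<^bsub>G1\<^esub> a" using rc_elem by blast
      have bc: "b \<in> carrier G1" using B1_carr b by blast
      have sk: "s00 k \<in> carrier G1" using k by simp
      have "s00 k \<otimes>\<^bsub>G1\<^esub> y \<otimes>\<^bsub>G1\<^esub> inv\<^bsub>G1\<^esub> (s00 k)
          = (s00 k \<otimes>\<^bsub>G1\<^esub> b \<otimes>\<^bsub>G1\<^esub> inv\<^bsub>G1\<^esub> (s00 k)) \<otimes>\<^bsub>G1\<^esub>
            (s00 k \<otimes>\<^bsub>G1\<^esub> a \<otimes>\<^bsub>G1\<^esub> inv\<^bsub>G1\<^esub> (s00 k))"
        using b(2) bc sk a by (simp add: G1.m_assoc)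
      hence "?f y = ?f a" using rc_eq[OF B1_conj[OF sk b(1)]] sk a by simp
      thus "z \<in> {?f a}" using y by simp
    qed
    show "{?f a} \<subseteq> ?f ` rc a" using rc_self[OF a] by blast
  qed
  thus ?thesis by (simp add: T1_xact)
qed

lemma xmu_img: "xmu (T1 S) ` carrier (xM (T1 S)) = B0"
proof -
  have "xmu (T1 S) ` carrier (xM (T1 S)) = d10 ` N1"
    unfolding xM_carrier image_image using xmu_rc mem_N1 by (auto simp: image_def)
  thus ?thesis by (simp add: B0_eq)
qed

lemma xcls_eq: "xcls (T1 S) k = cls0 S k"
  by (simp add: xcls_def cls0_def xmu_img)

lemma Phi_rep: "a \<in> N1 \<Longrightarrow> h \<in> carrier G0 \<Longrightarrow> b \<in> carrier G0 \<Longrightarrow>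
   Phi S z (a \<otimes>\<^bsub>G1\<^esub> s00 h, b) = z (rc a, h, b)"
proof -
  assume a: "a \<in> N1" and h: "h \<in> carrier G0" and b: "b \<in> carrier G0"
  have ac: "a \<in> carrier G1" and a1: "d11 a = \<one>\<^bsub>G0\<^esub>" using a mem_N1 by auto
  have d: "d11 (a \<otimes>\<^bsub>G1\<^esub> s00 h) = h" using ac a1 h by (simp add: i_d11_s00)
  have e: "a \<otimes>\<^bsub>G1\<^esub> s00 h \<otimes>\<^bsub>G1\<^esub> inv\<^bsub>G1\<^esub> (s00 h) = a"
    using ac h by (simp add: G1.m_assoc)
  show ?thesis using ac h b d e by (simp add: Phi_def sdom2_def eta1_def)
qed

definition "g2o p n k = s10 p \<otimes>\<^bsub>G2\<^esub> s11 n \<otimes>\<^bsub>G2\<^esub> s10 (s00 k)"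

lemma N1D: "a \<in> N1 \<Longrightarrow> a \<in> carrier G1" "a \<in> N1 \<Longrightarrow> d11 a = \<one>\<^bsub>G0\<^esub>"
  using mem_N1 by auto

lemma g2o_carr: "p \<in> N1 \<Longrightarrow> n \<in> N1 \<Longrightarrow> k \<in> carrier G0 \<Longrightarrow> g2o p n k \<in> carrier G2"
  using N1D(1)[of p] N1D(1)[of n] by (simp add: g2o_def)

lemma g2o_faces:
  assumes p: "p \<in> N1" and n: "n \<in> N1" and k: "k \<in> carrier G0"
  shows "d20 (g2o p n k) = p \<otimes>\<^bsub>G1\<^esub> s00 (d10 n \<otimes>\<^bsub>G0\<^esub> k)"
    and "d21 (g2o p n k) = (p \<otimes>\<^bsub>G1\<^esub> n) \<otimes>\<^bsub>G1\<^esub> s00 k"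
    and "d22 (g2o p n k) = n \<otimes>\<^bsub>G1\<^esub> s00 k"
    and "d11 (d22 (g2o p n k)) = k"
proof -
  have pc: "p \<in> carrier G1" and p1: "d11 p = \<one>\<^bsub>G0\<^esub>" using p N1D by auto
  have nc: "n \<in> carrier G1" and n1: "d11 n = \<one>\<^bsub>G0\<^esub>" using n N1D by auto
  show "d20 (g2o p n k) = p \<otimes>\<^bsub>G1\<^esub> s00 (d10 n \<otimes>\<^bsub>G0\<^esub> k)"
    using pc nc k by (simp add: g2o_def i_d20_s10 i_d20_s11 G1.m_assoc)
  show "d21 (g2o p n k) = (p \<otimes>\<^bsub>G1\<^esub> n) \<otimes>\<^bsub>G1\<^esub> s00 k"
    using pc nc k by (simp add: g2o_def i_d21_s10 i_d21_s11 G1.m_assoc)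
  show d2: "d22 (g2o p n k) = n \<otimes>\<^bsub>G1\<^esub> s00 k"
    using pc nc k p1 by (simp add: g2o_def i_d22_s10 i_d22_s11 i_d11_s00 G1.m_assoc)
  show "d11 (d22 (g2o p n k)) = k"
    unfolding d2 using nc k n1 by (simp add: i_d11_s00)
qed

lemma N1_mult: "a \<in> N1 \<Longrightarrow> b \<in> N1 \<Longrightarrow> a \<otimes>\<^bsub>G1\<^esub> b \<in> N1"
  by (rule subgroup.m_closed[OF N1_sub])

lemma N1_conj: "k \<in> carrier G0 \<Longrightarrow> m \<in> N1 \<Longrightarrow> s00 k \<otimes>\<^bsub>G1\<^esub> m \<otimes>\<^bsub>G1\<^esub> inv\<^bsub>G1\<^esub> (s00 k) \<in> N1"
  using N1D[of m] unfolding mem_N1 by (simp add: i_d11_s00)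

lemma key:
  assumes p: "p \<in> N1" and n: "n \<in> N1" and m: "m \<in> N1"
    and k: "k \<in> carrier G0" and h: "h \<in> carrier G0" and g: "g \<in> carrier G0"
  shows "sd2 S \<rho> (Phi S z) (g2o p n k, m \<otimes>\<^bsub>G1\<^esub> s00 h, g)
       = xd2 (T1 S) \<rho> z (rc p, rc n, k, rc m, h, g)"
proof -
  have pc: "p \<in> carrier G1" using p N1D by auto
  have nc: "n \<in> carrier G1" using n N1D by auto
  have mc: "m \<in> carrier G1" and m1: "d11 m = \<one>\<^bsub>G0\<^esub>" using m N1D by auto
  have e1: "Phi S z (d20 (g2o p n k), d10 (m \<otimes>\<^bsub>G1\<^esub> s00 h)) = z (rc p, d10 n \<otimes>\<^bsub>G0\<^esub> k, d10 m \<otimes>\<^bsub>G0\<^esub> h)"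
  proof -
    have "d10 (m \<otimes>\<^bsub>G1\<^esub> s00 h) = d10 m \<otimes>\<^bsub>G0\<^esub> h" using mc h by (simp add: i_d10_s00)
    thus ?thesis using g2o_faces(1)[OF p n k] Phi_rep[OF p, of "d10 n \<otimes>\<^bsub>G0\<^esub> k" "d10 m \<otimes>\<^bsub>G0\<^esub> h" z]
      nc k mc h by simp
  qed
  have e2: "Phi S z (d21 (g2o p n k), d11 (m \<otimes>\<^bsub>G1\<^esub> s00 h) \<otimes>\<^bsub>G0\<^esub> g) = z (rc (p \<otimes>\<^bsub>G1\<^esub> n), k, h \<otimes>\<^bsub>G0\<^esub> g)"
  proof -
    have "d11 (m \<otimes>\<^bsub>G1\<^esub> s00 h) = h" using mc h m1 by (simp add: i_d11_s00)
    thus ?thesis using g2o_faces(2)[OF p n k] Phi_rep[OF N1_mult[OF p n] k, of "h \<otimes>\<^bsub>G0\<^esub> g" z]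
      h g by simp
  qed
  have e3: "Phi S z (d22 (g2o p n k) \<otimes>\<^bsub>G1\<^esub> (m \<otimes>\<^bsub>G1\<^esub> s00 h), g)
      = z (rc (n \<otimes>\<^bsub>G1\<^esub> (s00 k \<otimes>\<^bsub>G1\<^esub> m \<otimes>\<^bsub>G1\<^esub> inv\<^bsub>G1\<^esub> (s00 k))), k \<otimes>\<^bsub>G0\<^esub> h, g)"
  proof -
    have "d22 (g2o p n k) \<otimes>\<^bsub>G1\<^esub> (m \<otimes>\<^bsub>G1\<^esub> s00 h)
        = (n \<otimes>\<^bsub>G1\<^esub> (s00 k \<otimes>\<^bsub>G1\<^esub> m \<otimes>\<^bsub>G1\<^esub> inv\<^bsub>G1\<^esub> (s00 k))) \<otimes>\<^bsub>G1\<^esub> s00 (k \<otimes>\<^bsub>G0\<^esub> h)"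
      using g2o_faces(3)[OF p n k] nc mc k h by (simp add: G1.m_assoc)
    thus ?thesis using Phi_rep[OF N1_mult[OF n N1_conj[OF k m]], of "k \<otimes>\<^bsub>G0\<^esub> h" g z] k h g by simp
  qed
  have e4: "Phi S z (m \<otimes>\<^bsub>G1\<^esub> s00 h, g) = z (rc m, h, g)" by (rule Phi_rep[OF m h g])
  have x1: "xmu (T1 S) (rc n) = d10 n" by (rule xmu_rc[OF nc])
  have x2: "xmu (T1 S) (rc m) = d10 m" by (rule xmu_rc[OF mc])
  have x3: "rc p \<otimes>\<^bsub>xM (T1 S)\<^esub> rc n = rc (p \<otimes>\<^bsub>G1\<^esub> n)" by (rule xM_mult[OF pc nc])
  have x4: "rc n \<otimes>\<^bsub>xM (T1 S)\<^esub> xact (T1 S) k (rc m)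
        = rc (n \<otimes>\<^bsub>G1\<^esub> (s00 k \<otimes>\<^bsub>G1\<^esub> m \<otimes>\<^bsub>G1\<^esub> inv\<^bsub>G1\<^esub> (s00 k)))"
    using xact_rc[OF k mc] xM_mult[OF nc, of "s00 k \<otimes>\<^bsub>G1\<^esub> m \<otimes>\<^bsub>G1\<^esub> inv\<^bsub>G1\<^esub> (s00 k)"] k mc by simp
  have L: "sd2 S \<rho> (Phi S z) (g2o p n k, m \<otimes>\<^bsub>G1\<^esub> s00 h, g)
     = z (rc p, d10 n \<otimes>\<^bsub>G0\<^esub> k, d10 m \<otimes>\<^bsub>G0\<^esub> h) - z (rc (p \<otimes>\<^bsub>G1\<^esub> n), k, h \<otimes>\<^bsub>G0\<^esub> g)
       + z (rc (n \<otimes>\<^bsub>G1\<^esub> (s00 k \<otimes>\<^bsub>G1\<^esub> m \<otimes>\<^bsub>G1\<^esub> inv\<^bsub>G1\<^esub> (s00 k))), k \<otimes>\<^bsub>G0\<^esub> h, g)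
       - \<rho> (cls0 S k) (z (rc m, h, g))"
    by (simp only: sd2_def case_prod_conv e1 e2 e3 e4 g2o_faces(4)[OF p n k])
  have R: "xd2 (T1 S) \<rho> z (rc p, rc n, k, rc m, h, g)
     = z (rc p, d10 n \<otimes>\<^bsub>G0\<^esub> k, d10 m \<otimes>\<^bsub>G0\<^esub> h) - z (rc (p \<otimes>\<^bsub>G1\<^esub> n), k, h \<otimes>\<^bsub>G0\<^esub> g)
       + z (rc (n \<otimes>\<^bsub>G1\<^esub> (s00 k \<otimes>\<^bsub>G1\<^esub> m \<otimes>\<^bsub>G1\<^esub> inv\<^bsub>G1\<^esub> (s00 k))), k \<otimes>\<^bsub>G0\<^esub> h, g)
       - \<rho> (cls0 S k) (z (rc m, h, g))"
    by (simp only: xd2_def case_prod_conv x1 x2 x3 x4 T1_xG xcls_eq)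
  show ?thesis using L R by simp
qed

lemma xdom2_eq: "xdom2 (T1 S) = carrier (xM (T1 S)) \<times> carrier G0 \<times> carrier G0"
  by (simp add: xdom2_def)

lemma eta_N1: "g1 \<in> carrier G1 \<Longrightarrow> g1 \<otimes>\<^bsub>G1\<^esub> inv\<^bsub>G1\<^esub> (s00 (d11 g1)) \<in> N1"
  unfolding mem_N1 by (simp add: i_d11_s00)

lemma eta_dec: "g1 \<in> carrier G1 \<Longrightarrow> g1 = (g1 \<otimes>\<^bsub>G1\<^esub> inv\<^bsub>G1\<^esub> (s00 (d11 g1))) \<otimes>\<^bsub>G1\<^esub> s00 (d11 g1)"
  by (simp add: G1.m_assoc)

lemma rc_in: "a \<in> N1 \<Longrightarrow> rc a \<in> carrier (xM (T1 S))"
  by (simp add: xM_carrier)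

lemma xM_elem: "P \<in> carrier (xM (T1 S)) \<Longrightarrow> \<exists>a\<in>N1. P = rc a"
  by (auto simp: xM_carrier)

lemma Phi_C2: "Phi S z \<in> sC2 S"
  by (simp add: Phi_def sC2_def)

lemma Phi_inj: "inj_on (Phi S) (xC2 (T1 S))"
proof (rule inj_onI)
  fix z1 z2 assume z1: "z1 \<in> xC2 (T1 S)" and z2: "z2 \<in> xC2 (T1 S)" and e: "Phi S z1 = Phi S z2"
  show "z1 = z2"
  proof (rule ext)
    fix t :: "'a set \<times> 'a \<times> 'a"
    obtain P h g where t: "t = (P, h, g)" by (metis prod_cases3)
    show "z1 t = z2 t"
    proof (cases "t \<in> xdom2 (T1 S)")
      case True
      hence tP: "P \<in> carrier (xM (T1 S))" and th: "h \<in> carrier G0" and tg: "g \<in> carrier G0"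
        unfolding t xdom2_eq by auto
      obtain a where a: "a \<in> N1" "P = rc a" using xM_elem[OF tP] by blast
      have "z1 t = z1 (rc a, h, g)" by (simp only: t a(2))
      also have "... = Phi S z1 (a \<otimes>\<^bsub>G1\<^esub> s00 h, g)" by (rule Phi_rep[OF a(1) th tg, symmetric])
      also have "... = Phi S z2 (a \<otimes>\<^bsub>G1\<^esub> s00 h, g)" by (simp only: e)
      also have "... = z2 (rc a, h, g)" by (rule Phi_rep[OF a(1) th tg])
      also have "... = z2 t" by (simp only: t a(2))
      finally show ?thesis .
    next
      case False
      have "z1 t = undefined" using z1 False unfolding xC2_def by (rule extensional_arb)
      moreover have "z2 t = undefined" using z2 False unfolding xC2_def by (rule extensional_arb)
      ultimately show ?thesis by simp
    qed
  qed
qed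

lemma Phi_B1: "b \<in> B1 \<Longrightarrow> y \<in> carrier G1 \<Longrightarrow> w \<in> carrier G0 \<Longrightarrow>
    Phi S z (b \<otimes>\<^bsub>G1\<^esub> y, w) = Phi S z (y, w)"
proof -
  assume b: "b \<in> B1" and y: "y \<in> carrier G1" and w: "w \<in> carrier G0"
  have bc: "b \<in> carrier G1" and b1: "d11 b = \<one>\<^bsub>G0\<^esub>" using B1_N1[OF b] N1D by auto
  have d: "d11 (b \<otimes>\<^bsub>G1\<^esub> y) = d11 y" using bc b1 y by simp
  have r: "rc (b \<otimes>\<^bsub>G1\<^esub> y \<otimes>\<^bsub>G1\<^esub> inv\<^bsub>G1\<^esub> (s00 (d11 y))) = rc (y \<otimes>\<^bsub>G1\<^esub> inv\<^bsub>G1\<^esub> (s00 (d11 y)))"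
    using rc_eq[OF b, of "y \<otimes>\<^bsub>G1\<^esub> inv\<^bsub>G1\<^esub> (s00 (d11 y))"] bc y by (simp add: G1.m_assoc)
  show ?thesis using bc y w d r by (simp add: Phi_def sdom2_def eta1_def)
qed

lemma dir1: "z \<in> xZ2 (T1 S) \<rho> \<Longrightarrow> Phi S z \<in> sZ2 S \<rho>"
proof -
  assume z: "z \<in> xZ2 (T1 S) \<rho>"
  have "sd2 S \<rho> (Phi S z) (g2, g1, g0) = 0"
    if g2: "g2 \<in> carrier G2" and g1: "g1 \<in> carrier G1" and g0: "g0 \<in> carrier G0" for g2 g1 g0
  proof -
    define k where "k = d11 (d22 g2)"
    define n where "n = d22 g2 \<otimes>\<^bsub>G1\<^esub> inv\<^bsub>G1\<^esub> (s00 k)"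
    define p where "p = d21 g2 \<otimes>\<^bsub>G1\<^esub> inv\<^bsub>G1\<^esub> (d22 g2)"
    define h where "h = d11 g1"
    define m where "m = g1 \<otimes>\<^bsub>G1\<^esub> inv\<^bsub>G1\<^esub> (s00 h)"
    have k: "k \<in> carrier G0" using g2 by (simp add: k_def)
    have h: "h \<in> carrier G0" using g1 by (simp add: h_def)
    have n: "n \<in> N1" unfolding mem_N1 n_def using g2 k by (simp add: i_d11_s00 k_def)
    have p: "p \<in> N1" unfolding mem_N1 p_def using g2 by (simp add: i_d11_d22)
    have m: "m \<in> N1" unfolding m_def h_def using eta_N1[OF g1] .
    have g1e: "g1 = m \<otimes>\<^bsub>G1\<^esub> s00 h" unfolding m_def h_def by (rule eta_dec[OF g1])
    have nc: "n \<in> carrier G1" and pc: "p \<in> carrier G1" using n p N1D by auto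
    let ?o = "g2o p n k"
    have oc: "?o \<in> carrier G2" by (rule g2o_carr[OF p n k])
    have f1: "d21 ?o = d21 g2"
    proof -
      have "d21 ?o = (p \<otimes>\<^bsub>G1\<^esub> n) \<otimes>\<^bsub>G1\<^esub> s00 k" by (rule g2o_faces(2)[OF p n k])
      also have "... = d21 g2" unfolding p_def n_def using g2 k by (simp add: G1.m_assoc)
      finally show ?thesis .
    qed
    have f2: "d22 ?o = d22 g2"
    proof -
      have "d22 ?o = n \<otimes>\<^bsub>G1\<^esub> s00 k" by (rule g2o_faces(3)[OF p n k])
      also have "... = d22 g2" unfolding n_def using g2 k by (simp add: G1.m_assoc)
      finally show ?thesis .
    qed
    define x where "x = g2 \<otimes>\<^bsub>G2\<^esub> inv\<^bsub>G2\<^esub> ?o"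
    have xN: "x \<in> N2" unfolding mem_N2 x_def using g2 oc f1 f2 by simp
    have bB: "d20 x \<in> B1" unfolding B1_eq using xN by blast
    have f0: "d20 g2 = d20 x \<otimes>\<^bsub>G1\<^esub> d20 ?o"
      unfolding x_def using g2 oc by (simp add: G1.m_assoc)
    have "sd2 S \<rho> (Phi S z) (g2, g1, g0) = sd2 S \<rho> (Phi S z) (?o, g1, g0)"
    proof -
      have c1: "d20 ?o \<in> carrier G1" using oc by simp
      have c2: "d10 g1 \<in> carrier G0" using g1 by simp
      have "Phi S z (d20 g2, d10 g1) = Phi S z (d20 ?o, d10 g1)"
        unfolding f0 by (rule Phi_B1[OF bB c1 c2])
      thus ?thesis by (simp only: sd2_def case_prod_conv f1 f2)
    qed
    also have "... = xd2 (T1 S) \<rho> z (rc p, rc n, k, rc m, h, g0)"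
      unfolding g1e by (rule key[OF p n m k h g0])
    also have "... = 0"
    proof -
      have zz: "\<forall>p\<in>carrier (xM (T1 S)). \<forall>n\<in>carrier (xM (T1 S)). \<forall>k\<in>carrier (xG (T1 S)).
                  \<forall>m\<in>carrier (xM (T1 S)). \<forall>h\<in>carrier (xG (T1 S)). \<forall>g\<in>carrier (xG (T1 S)).
                  xd2 (T1 S) \<rho> z (p, n, k, m, h, g) = 0"
        using z unfolding xZ2_def by blast
      show ?thesis using zz[unfolded T1_xG, rule_format, OF rc_in[OF p] rc_in[OF n] k rc_in[OF m] h g0] .
    qed
    finally show ?thesis .
  qed
  thus ?thesis by (simp add: sZ2_def Phi_C2)
qed

lemma sZ2D: "c \<in> sZ2 S \<rho> \<Longrightarrow> g2 \<in> carrier G2 \<Longrightarrow> g1 \<in> carrier G1 \<Longrightarrow> g0 \<in> carrier G0 \<Longrightarrow>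
   sd2 S \<rho> c (g2, g1, g0) = 0"
  unfolding sZ2_def by blast

lemma cinv:
  assumes c: "c \<in> sZ2 S \<rho>" and b: "b \<in> B1" and y: "y \<in> carrier G1" and w: "w \<in> carrier G0"
  shows "c (b \<otimes>\<^bsub>G1\<^esub> y, w) = c (y, w)"
proof -
  obtain x where x: "x \<in> N2" "b = d20 x" using b unfolding B1_eq by blast
  have xc: "x \<in> carrier G2" and x1: "d21 x = \<one>\<^bsub>G1\<^esub>" and x2: "d22 x = \<one>\<^bsub>G1\<^esub>"
    using x(1) mem_N2 by auto
  let ?A = "x \<otimes>\<^bsub>G2\<^esub> s10 y"
  let ?B = "s10 y"
  have Ac: "?A \<in> carrier G2" using xc y by simp
  have Bc: "?B \<in> carrier G2" using y by simp
  have sw: "s00 w \<in> carrier G1" using w by simp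
  have one: "\<one>\<^bsub>G0\<^esub> \<in> carrier G0" by simp
  have fA0: "d20 ?A = b \<otimes>\<^bsub>G1\<^esub> y" using xc y x(2) by (simp add: i_d20_s10)
  have fA1: "d21 ?A = y" using xc y x1 by (simp add: i_d21_s10)
  have fA2: "d22 ?A = s00 (d11 y)" using xc y x2 by (simp add: i_d22_s10)
  have fB0: "d20 ?B = y" using y by (simp add: i_d20_s10)
  have fB1: "d21 ?B = y" using y by (simp add: i_d21_s10)
  have fB2: "d22 ?B = s00 (d11 y)" using y by (simp add: i_d22_s10)
  have w0: "d10 (s00 w) = w" "d11 (s00 w) = w" using w by (simp_all add: i_d10_s00 i_d11_s00)
  have zA: "sd2 S \<rho> c (?A, s00 w, \<one>\<^bsub>G0\<^esub>) = 0" by (rule sZ2D[OF c Ac sw one])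
  have zB: "sd2 S \<rho> c (?B, s00 w, \<one>\<^bsub>G0\<^esub>) = 0" by (rule sZ2D[OF c Bc sw one])
  have eA: "sd2 S \<rho> c (?A, s00 w, \<one>\<^bsub>G0\<^esub>) = c (b \<otimes>\<^bsub>G1\<^esub> y, w) - c (y, w \<otimes>\<^bsub>G0\<^esub> \<one>\<^bsub>G0\<^esub>)
     + c (s00 (d11 y) \<otimes>\<^bsub>G1\<^esub> s00 w, \<one>\<^bsub>G0\<^esub>) - \<rho> (cls0 S (d11 (s00 (d11 y)))) (c (s00 w, \<one>\<^bsub>G0\<^esub>))"
    by (simp only: sd2_def case_prod_conv fA0 fA1 fA2 w0)
  have eB: "sd2 S \<rho> c (?B, s00 w, \<one>\<^bsub>G0\<^esub>) = c (y, w) - c (y, w \<otimes>\<^bsub>G0\<^esub> \<one>\<^bsub>G0\<^esub>)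
     + c (s00 (d11 y) \<otimes>\<^bsub>G1\<^esub> s00 w, \<one>\<^bsub>G0\<^esub>) - \<rho> (cls0 S (d11 (s00 (d11 y)))) (c (s00 w, \<one>\<^bsub>G0\<^esub>))"
    by (simp only: sd2_def case_prod_conv fB0 fB1 fB2 w0)
  show ?thesis using zA zB unfolding eA eB by (rule ab_cancel4)
qed

definition "zof c = restrict (\<lambda>(P, h, g). c ((SOME a. a \<in> P) \<otimes>\<^bsub>G1\<^esub> s00 h, g)) (xdom2 (T1 S))"

lemma zof_val:
  assumes c: "c \<in> sZ2 S \<rho>" and m: "m \<in> N1" and h: "h \<in> carrier G0" and g: "g \<in> carrier G0"
  shows "zof c (rc m, h, g) = c (m \<otimes>\<^bsub>G1\<^esub> s00 h, g)"
proof -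
  have mc: "m \<in> carrier G1" using m N1D by auto
  have dom: "(rc m, h, g) \<in> xdom2 (T1 S)" using rc_in[OF m] h g by (simp add: xdom2_eq)
  define a0 where "a0 = (SOME a. a \<in> rc m)"
  have "a0 \<in> rc m" unfolding a0_def using rc_self[OF mc] by (rule someI)
  then obtain b where b: "b \<in> B1" "a0 = b \<otimes>\<^bsub>G1\<^esub> m" using rc_elem by blast
  have bc: "b \<in> carrier G1" using B1_carr[OF b(1)] .
  have "zof c (rc m, h, g) = c (a0 \<otimes>\<^bsub>G1\<^esub> s00 h, g)"
    using dom unfolding zof_def a0_def by simp
  also have "a0 \<otimes>\<^bsub>G1\<^esub> s00 h = b \<otimes>\<^bsub>G1\<^esub> (m \<otimes>\<^bsub>G1\<^esub> s00 h)"
    using b(2) bc mc h by (simp add: G1.m_assoc)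
  also have "c (b \<otimes>\<^bsub>G1\<^esub> (m \<otimes>\<^bsub>G1\<^esub> s00 h), g) = c (m \<otimes>\<^bsub>G1\<^esub> s00 h, g)"
    using mc h by (intro cinv[OF c b(1) _ g]) simp
  finally show ?thesis .
qed

lemma zof_C2: "zof c \<in> xC2 (T1 S)"
  by (simp add: zof_def xC2_def)

lemma sdom2_dec:
  assumes "(g1, g0) \<in> sdom2 S"
  obtains m h where "m \<in> N1" "h \<in> carrier G0" "g0 \<in> carrier G0" "g1 = m \<otimes>\<^bsub>G1\<^esub> s00 h"
proof -
  have g1: "g1 \<in> carrier G1" and g0: "g0 \<in> carrier G0" using assms by (auto simp: sdom2_def)
  show ?thesis
    using that[OF eta_N1[OF g1] _ g0 eta_dec[OF g1]] g1 by simp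
qed

lemma Phi_zof: assumes c: "c \<in> sZ2 S \<rho>" shows "Phi S (zof c) = c"
proof (rule ext)
  fix t :: "'a \<times> 'a"
  obtain g1 g0 where t: "t = (g1, g0)" by (cases t)
  show "Phi S (zof c) t = c t"
  proof (cases "t \<in> sdom2 S")
    case True
    then obtain m h where mh: "m \<in> N1" "h \<in> carrier G0" "g0 \<in> carrier G0" "g1 = m \<otimes>\<^bsub>G1\<^esub> s00 h"
      unfolding t by (rule sdom2_dec)
    have "Phi S (zof c) t = Phi S (zof c) (m \<otimes>\<^bsub>G1\<^esub> s00 h, g0)" by (simp only: t mh(4))
    also have "... = zof c (rc m, h, g0)" by (rule Phi_rep[OF mh(1-3)])
    also have "... = c (m \<otimes>\<^bsub>G1\<^esub> s00 h, g0)" by (rule zof_val[OF c mh(1-3)])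
    also have "... = c t" by (simp only: t mh(4))
    finally show ?thesis .
  next
    case False
    have "Phi S (zof c) t = undefined" using Phi_C2[of "zof c"] False unfolding sC2_def by (rule extensional_arb)
    moreover have "c t = undefined" using c False unfolding sZ2_def sC2_def by (auto intro: extensional_arb)
    ultimately show ?thesis by simp
  qed
qed

lemma zof_Z2: assumes c: "c \<in> sZ2 S \<rho>" shows "zof c \<in> xZ2 (T1 S) \<rho>"
proof -
  have "xd2 (T1 S) \<rho> (zof c) (P, N, k, M, h, g) = 0"
    if P: "P \<in> carrier (xM (T1 S))" and N: "N \<in> carrier (xM (T1 S))" and k: "k \<in> carrier G0"
      and M: "M \<in> carrier (xM (T1 S))" and h: "h \<in> carrier G0" and g: "g \<in> carrier G0" for P N k M h g
  proof -
    obtain p where p: "p \<in> N1" "P = rc p" using xM_elem[OF P] by blast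
    obtain n where n: "n \<in> N1" "N = rc n" using xM_elem[OF N] by blast
    obtain m where m: "m \<in> N1" "M = rc m" using xM_elem[OF M] by blast
    have mc: "m \<in> carrier G1" using m N1D by auto
    have g1c: "m \<otimes>\<^bsub>G1\<^esub> s00 h \<in> carrier G1" using mc h by simp
    have "xd2 (T1 S) \<rho> (zof c) (P, N, k, M, h, g) = sd2 S \<rho> (Phi S (zof c)) (g2o p n k, m \<otimes>\<^bsub>G1\<^esub> s00 h, g)"
      unfolding p(2) n(2) m(2) by (rule key[OF p(1) n(1) m(1) k h g, symmetric])
    also have "... = sd2 S \<rho> c (g2o p n k, m \<otimes>\<^bsub>G1\<^esub> s00 h, g)" by (simp only: Phi_zof[OF c])
    also have "... = 0" by (rule sZ2D[OF c g2o_carr[OF p(1) n(1) k] g1c g])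
    finally show ?thesis .
  qed
  thus ?thesis using zof_C2[of c] unfolding xZ2_def by simp
qed

lemma Phi_add: "Phi S (addon (xdom2 (T1 S)) z z') = addon (sdom2 S) (Phi S z) (Phi S z')"
proof (rule ext)
  fix t :: "'a \<times> 'a"
  obtain g1 g0 where t: "t = (g1, g0)" by (cases t)
  show "Phi S (addon (xdom2 (T1 S)) z z') t = addon (sdom2 S) (Phi S z) (Phi S z') t"
  proof (cases "t \<in> sdom2 S")
    case True
    then obtain m h where mh: "m \<in> N1" "h \<in> carrier G0" "g0 \<in> carrier G0" "g1 = m \<otimes>\<^bsub>G1\<^esub> s00 h"
      unfolding t by (rule sdom2_dec)
    have dom: "(rc m, h, g0) \<in> xdom2 (T1 S)" using rc_in[OF mh(1)] mh(2,3) by (simp add: xdom2_eq)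
    have "Phi S (addon (xdom2 (T1 S)) z z') t = addon (xdom2 (T1 S)) z z' (rc m, h, g0)"
      unfolding t mh(4) by (rule Phi_rep[OF mh(1-3)])
    also have "... = z (rc m, h, g0) + z' (rc m, h, g0)" using dom by (simp add: addon_def)
    also have "... = Phi S z t + Phi S z' t"
      unfolding t mh(4) Phi_rep[OF mh(1-3)] ..
    also have "... = addon (sdom2 S) (Phi S z) (Phi S z') t" using True by (simp add: addon_def)
    finally show ?thesis .
  next
    case False
    thus ?thesis by (simp add: addon_def Phi_def)
  qed
qed

lemma Phi_B: "Phi S (restrict (xd1 (T1 S) \<rho> c) (xdom2 (T1 S))) = restrict (sd1 S \<rho> c) (sdom2 S)"
proof (rule ext)
  fix t :: "'a \<times> 'a"
  obtain g1 g0 where t: "t = (g1, g0)" by (cases t)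
  show "Phi S (restrict (xd1 (T1 S) \<rho> c) (xdom2 (T1 S))) t = restrict (sd1 S \<rho> c) (sdom2 S) t"
  proof (cases "t \<in> sdom2 S")
    case True
    then obtain m h where mh: "m \<in> N1" "h \<in> carrier G0" "g0 \<in> carrier G0" "g1 = m \<otimes>\<^bsub>G1\<^esub> s00 h"
      unfolding t by (rule sdom2_dec)
    have mc: "m \<in> carrier G1" and m1: "d11 m = \<one>\<^bsub>G0\<^esub>" using mh(1) N1D by auto
    have dom: "(rc m, h, g0) \<in> xdom2 (T1 S)" using rc_in[OF mh(1)] mh(2,3) by (simp add: xdom2_eq)
    have d0: "d10 (m \<otimes>\<^bsub>G1\<^esub> s00 h) = d10 m \<otimes>\<^bsub>G0\<^esub> h" using mc mh(2) by (simp add: i_d10_s00)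
    have d1: "d11 (m \<otimes>\<^bsub>G1\<^esub> s00 h) = h" using mc m1 mh(2) by (simp add: i_d11_s00)
    have "Phi S (restrict (xd1 (T1 S) \<rho> c) (xdom2 (T1 S))) t = restrict (xd1 (T1 S) \<rho> c) (xdom2 (T1 S)) (rc m, h, g0)"
      unfolding t mh(4) by (rule Phi_rep[OF mh(1-3)])
    also have "... = xd1 (T1 S) \<rho> c (rc m, h, g0)" using dom by simp
    also have "... = c (d10 m \<otimes>\<^bsub>G0\<^esub> h) - c (h \<otimes>\<^bsub>G0\<^esub> g0) + \<rho> (cls0 S h) (c g0)"
      by (simp only: xd1_def case_prod_conv xmu_rc[OF mc] T1_xG xcls_eq)
    also have "... = sd1 S \<rho> c (m \<otimes>\<^bsub>G1\<^esub> s00 h, g0)"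
      by (simp only: sd1_def case_prod_conv d0 d1)
    also have "... = restrict (sd1 S \<rho> c) (sdom2 S) t" using True unfolding t mh(4) by simp
    finally show ?thesis .
  next
    case False
    thus ?thesis by (simp add: Phi_def)
  qed
qed

end

theorem proposition3p13:
  fixes S :: "'a simplicial" and \<rho> :: "'a set \<Rightarrow> 'm::ab_group_add \<Rightarrow> 'm"
  assumes "simplicial_group S" and "pi0_module S \<rho>"
  shows "bij_betw (Phi S) (xZ2 (T1 S) \<rho>) (sZ2 S \<rho>)
       \<and> (\<forall>z\<in>xZ2 (T1 S) \<rho>. \<forall>z'\<in>xZ2 (T1 S) \<rho>.
            Phi S (addon (xdom2 (T1 S)) z z') = addon (sdom2 S) (Phi S z) (Phi S z'))
       \<and> bij_betw (Phi S) (xB2 (T1 S) \<rho>) (sB2 S \<rho>)"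
proof -
  interpret SG S by (rule SG.intro[OF assms(1)])
  have Z: "bij_betw (Phi S) (xZ2 (T1 S) \<rho>) (sZ2 S \<rho>)"
  proof -
    have "inj_on (Phi S) (xZ2 (T1 S) \<rho>)"
      by (rule inj_on_subset[OF Phi_inj]) (auto simp: xZ2_def)
    moreover have "Phi S ` xZ2 (T1 S) \<rho> = sZ2 S \<rho>"
    proof
      show "Phi S ` xZ2 (T1 S) \<rho> \<subseteq> sZ2 S \<rho>" using dir1 by blast
      show "sZ2 S \<rho> \<subseteq> Phi S ` xZ2 (T1 S) \<rho>"
      proof
        fix c assume c: "c \<in> sZ2 S \<rho>"
        show "c \<in> Phi S ` xZ2 (T1 S) \<rho>"
          using zof_Z2[OF c] Phi_zof[OF c] by (metis image_eqI)
      qed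
    qed
    ultimately show ?thesis unfolding bij_betw_def by blast
  qed
  have A: "\<forall>z\<in>xZ2 (T1 S) \<rho>. \<forall>z'\<in>xZ2 (T1 S) \<rho>.
            Phi S (addon (xdom2 (T1 S)) z z') = addon (sdom2 S) (Phi S z) (Phi S z')"
    using Phi_add by blast
  have B: "bij_betw (Phi S) (xB2 (T1 S) \<rho>) (sB2 S \<rho>)"
  proof -
    have sub: "xB2 (T1 S) \<rho> \<subseteq> xC2 (T1 S)" by (auto simp: xB2_def xC2_def)
    have "inj_on (Phi S) (xB2 (T1 S) \<rho>)" by (rule inj_on_subset[OF Phi_inj sub])
    moreover have "Phi S ` xB2 (T1 S) \<rho> = sB2 S \<rho>"
    proof -
      have e: "xC1 (T1 S) = sC1 S" by (simp add: xC1_def sC1_def xdom1_def sdom1_def)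
      have "Phi S ` xB2 (T1 S) \<rho> = (\<lambda>c. Phi S (restrict (xd1 (T1 S) \<rho> c) (xdom2 (T1 S)))) ` xC1 (T1 S)"
        unfolding xB2_def image_image ..
      also have "... = (\<lambda>c. restrict (sd1 S \<rho> c) (sdom2 S)) ` sC1 S" unfolding e Phi_B ..
      finally show ?thesis unfolding sB2_def .
    qed
    ultimately show ?thesis unfolding bij_betw_def by blast
  qed
  show ?thesis using Z A B by blast
qed

end
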